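(* Let $\mathcal{L}$ be a finite-dimensional Lie algebra over a field $F$ such that $d(\mathcal{L}) = \dim_F(\mathcal{L})$. Then either $\mathcal{L}$ is abelian, or $\mathcal{L} = Fx \oplus \mathcal{A}$ for some $x \in \mathcal{L}$, where $\mathcal{A}$ is an abelian ideal of codimension $1$ in $\mathcal{L}$ and $\mathrm{ad}(x)|_{\mathcal{A}} = \mathrm{id}_{\mathcal{A}}$ (in particular $\mathcal{L}$ is metabelian).
   Context: $d(\mathcal{L})$ denotes the minimal number of generators of $\mathcal{L}$ as a Lie algebra. *)

theory Defs
  imports Complex_Main
begin

definition lie_algebra ::
  "('k::field \<Rightarrow> 'v::ab_group_add \<Rightarrow> 'v) \<Rightarrow> ('v \<Rightarrow> 'v \<Rightarrow> 'v) \<Rightarrow> bool" where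
  "lie_algebra scale br \<longleftrightarrow>
     vector_space scale \<and>
     (\<forall>x y z. br (x + y) z = br x z + br y z) \<and>
     (\<forall>x y z. br x (y + z) = br x y + br x z) \<and>
     (\<forall>c x y. br (scale c x) y = scale c (br x y)) \<and>
     (\<forall>c x y. br x (scale c y) = scale c (br x y)) \<and>
     (\<forall>x. br x x = 0) \<and>
     (\<forall>x y z. br x (br y z) + br y (br z x) + br z (br x y) = 0)"

definition finite_dim :: "('k::field \<Rightarrow> 'v::ab_group_add \<Rightarrow> 'v) \<Rightarrow> bool" where
  "finite_dim scale \<longleftrightarrow> (\<exists>B. finite B \<and> module.span scale B = UNIV)"

definition lie_subalgebra ::
  "('k::field \<Rightarrow> 'v::ab_group_add \<Rightarrow> 'v) \<Rightarrow> ('v \<Rightarrow> 'v \<Rightarrow> 'v) \<Rightarrow> 'v set \<Rightarrow> bool" where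
  "lie_subalgebra scale br S \<longleftrightarrow>
     module.subspace scale S \<and> (\<forall>x\<in>S. \<forall>y\<in>S. br x y \<in> S)"

definition lie_generated ::
  "('k::field \<Rightarrow> 'v::ab_group_add \<Rightarrow> 'v) \<Rightarrow> ('v \<Rightarrow> 'v \<Rightarrow> 'v) \<Rightarrow> 'v set \<Rightarrow> 'v set" where
  "lie_generated scale br X = \<Inter>{S. lie_subalgebra scale br S \<and> X \<subseteq> S}"

definition min_generators ::
  "('k::field \<Rightarrow> 'v::ab_group_add \<Rightarrow> 'v) \<Rightarrow> ('v \<Rightarrow> 'v \<Rightarrow> 'v) \<Rightarrow> nat" where
  "min_generators scale br =
     (LEAST n. \<exists>X. finite X \<and> card X = n \<and> lie_generated scale br X = UNIV)"

definition lie_ideal ::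
  "('k::field \<Rightarrow> 'v::ab_group_add \<Rightarrow> 'v) \<Rightarrow> ('v \<Rightarrow> 'v \<Rightarrow> 'v) \<Rightarrow> 'v set \<Rightarrow> bool" where
  "lie_ideal scale br I \<longleftrightarrow>
     module.subspace scale I \<and> (\<forall>y. \<forall>a\<in>I. br y a \<in> I)"

end

theory Submission imports Defs begin

locale lieA = vector_space scale for scale :: "'k::field \<Rightarrow> 'v::ab_group_add \<Rightarrow> 'v" (infixr \<open>*s\<close> 75) +
  fixes br :: "'v \<Rightarrow> 'v \<Rightarrow> 'v"
  assumes ladd: "br (x + y) z = br x z + br y z"
    and radd: "br x (y + z) = br x y + br x z"
    and lsc: "br (c *s x) y = c *s (br x y)"
    and rsc: "br x (c *s y) = c *s (br x y)"
    and alt: "br x x = 0"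
    and jac: "br x (br y z) + br y (br z x) + br z (br x y) = 0"
begin

lemma br0l[simp]: "br 0 y = 0"
  using ladd[of 0 0 y] by simp
lemma br0r[simp]: "br y 0 = 0"
  using radd[of y 0 0] by simp
lemma anti: "br y x = - br x y"
proof -
  have "br (x+y) (x+y) = 0" by (rule alt)
  moreover have "br (x+y) (x+y) = br x x + br x y + (br y x + br y y)"
    by (simp add: ladd radd add.assoc)
  ultimately have "br x y + br y x = 0" by (simp add: alt)
  then show ?thesis by (simp add: eq_neg_iff_add_eq_0 add.commute)
qed

lemma span2: "v \<in> span {x, y} \<Longrightarrow> \<exists>a b. v = a *s x + b *s y"
proof -
  assume "v \<in> span {x,y}"
  then obtain k where "v - k *s x \<in> span {y}" by (auto simp: span_insert)
  then obtain m where "v - k *s x = m *s y" by (auto simp: span_singleton)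
  then have "v = k *s x + m *s y" by (simp add: algebra_simps)
  then show ?thesis by blast
qed

lemma span2I: "a *s x + b *s y \<in> span {x, y}"
  by (intro span_add span_scale span_base) auto

lemma step1:
  assumes fin: "finite S0" "span S0 = UNIV"
    and mg: "min_generators scale br = dim (UNIV::'v set)"
  shows "br x y \<in> span {x, y}"
proof (rule ccontr)
  define z where "z = br x y"
  assume nz: "br x y \<notin> span {x, y}"
  then have zn: "z \<notin> span {x,y}" by (simp add: z_def)
  have x0: "x \<noteq> 0" using nz span_zero by auto
  have yx: "y \<notin> span {x}"
  proof
    assume "y \<in> span {x}"
    then obtain k where "y = k *s x" by (auto simp: span_singleton)
    then have "br x y = 0" by (simp add: rsc alt)
    then show False using nz span_zero by auto
  qed
  have xy: "x \<noteq> y" using yx span_base[of x "{x}"] by auto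
  have zx: "z \<noteq> x" "z \<noteq> y" using zn span_base[of x "{x,y}"] span_base[of y "{x,y}"] by auto
  have i1: "independent {x}" using x0 by (simp add: independent_insert)
  have i2: "independent (insert y {x})" using i1 yx xy by (simp add: independent_insert)
  have e: "insert y {x} = {x,y}" by auto
  have i3: "independent (insert z (insert y {x}))" using i2 zn zx
    by (subst independent_insert) (auto simp: e)
  have e3: "insert z (insert y {x}) = {x,y,z}" by auto
  have ind: "independent {x,y,z}" using i3 e3 by simp
  define B where "B = extend_basis {x,y,z}"
  have sub: "{x,y,z} \<subseteq> B" unfolding B_def by (rule extend_basis_superset[OF ind])
  have indB: "independent B" unfolding B_def by (rule independent_extend_basis[OF ind])
  have spB: "span B = UNIV" unfolding B_def by (rule span_extend_basis[OF ind])
  have finB: "finite B" using independent_span_bound[OF fin(1) indB] fin(2) by auto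
  have cardB: "card B = dim (UNIV::'v set)" using basis_card_eq_dim[of B UNIV] indB spB by auto
  have "card {x,y,z} = 3" using xy zx by auto
  then have c3: "card B \<ge> 3" using card_mono[OF finB sub] by simp
  define X where "X = B - {z}"
  have finX: "finite X" using finB by (simp add: X_def)
  have cX: "card X = card B - 1" using sub finB by (simp add: X_def)
  have gen: "lie_generated scale br X = UNIV"
  proof -
    have "UNIV \<subseteq> S" if "lie_subalgebra scale br S" "X \<subseteq> S" for S
    proof -
      have ss: "subspace S" and cl: "\<forall>a\<in>S. \<forall>b\<in>S. br a b \<in> S"
        using that(1) unfolding lie_subalgebra_def by auto
      have "x \<in> S" "y \<in> S" using that(2) sub zx unfolding X_def by auto
      then have "z \<in> S" using cl by (simp add: z_def)
      then have "B \<subseteq> S" using that(2) unfolding X_def by auto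
      then have "span B \<subseteq> S" using span_minimal ss by blast
      then show ?thesis using spB by simp
    qed
    then show ?thesis unfolding lie_generated_def by blast
  qed
  have "min_generators scale br \<le> card X"
    unfolding min_generators_def using finX gen by (intro Least_le) blast
  then show False using mg cardB cX c3 by simp
qed

lemma solve: "a \<noteq> 0 \<Longrightarrow> a *s v = u \<Longrightarrow> v = inverse a *s u"
  by (metis scale_scale left_inverse scale_one)

lemma key:
  assumes P: "\<And>x y. br x y \<in> span {x, y}"
    and w0: "w0 \<notin> span {x0}" and r: "br x0 w0 = w0 + r *s x0"
  shows "\<exists>q. br x0 v = v + q *s x0"
proof (cases "v \<in> span {x0, w0}")
  case True
  then obtain a b where v: "v = a *s x0 + b *s w0" using span2 by blast
  have "br x0 v = b *s br x0 w0" by (simp add: v radd rsc alt)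
  also have "\<dots> = v + (b * r - a) *s x0" by (simp add: r v algebra_simps)
  finally show ?thesis by blast
next
  case False
  obtain c d where cd: "br x0 v = c *s x0 + d *s v" using span2[OF P] by blast
  obtain c' d' where cd': "br x0 (v + w0) = c' *s x0 + d' *s (v + w0)" using span2[OF P] by blast
  have "br x0 (v + w0) = c *s x0 + d *s v + w0 + r *s x0" by (simp add: radd cd r add.assoc)
  with cd' have E: "(d - d') *s v = (c' - c - r) *s x0 + (d' - 1) *s w0"
    by (simp add: algebra_simps)
  have dd: "d = d'"
  proof (rule ccontr)
    assume "d \<noteq> d'"
    then have "v = inverse (d - d') *s ((c' - c - r) *s x0 + (d' - 1) *s w0)"
      using E by (intro solve) simp_all
    also have "\<dots> \<in> span {x0, w0}" using span2I by (intro span_scale) 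
    finally show False using False by simp
  qed
  have d1: "d' = 1"
  proof (rule ccontr)
    assume "d' \<noteq> 1"
    from E dd have "(d' - 1) *s w0 = - ((c' - c - r) *s x0)" by (simp add: eq_neg_iff_add_eq_0 add.commute)
    then have "w0 = inverse (d' - 1) *s (- ((c' - c - r) *s x0))"
      using \<open>d' \<noteq> 1\<close> by (intro solve) simp_all
    also have "\<dots> \<in> span {x0}" by (intro span_scale span_neg span_base) auto
    finally show False using w0 by simp
  qed
  show ?thesis using cd dd d1 by (metis add.commute scale_one)
qed

lemma brneg: "br a (- b) = - br a b"
  using radd[of a b "-b"] by (simp add: eq_neg_iff_add_eq_0 add.commute)

lemma main:
  assumes fin: "finite S0" "span S0 = UNIV"
    and P: "\<And>x y. br x y \<in> span {x, y}"
    and nab: "br u w \<noteq> 0"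
  shows "\<exists>x A. lie_ideal scale br A \<and>
                (\<forall>a\<in>A. \<forall>b\<in>A. br a b = 0) \<and>
                dim A + 1 = dim (UNIV :: 'v set) \<and>
                x \<notin> A \<and>
                (\<forall>v. \<exists>c. \<exists>a\<in>A. v = c *s x + a) \<and>
                (\<forall>a\<in>A. br x a = a)"
proof -
  obtain a b where ab: "br u w = a *s u + b *s w" using span2[OF P] by blast
  have u0: "u \<noteq> 0" using nab by auto
  have w0: "w \<noteq> 0" using nab by auto
  have wu: "w \<notin> span {u}"
  proof
    assume "w \<in> span {u}"
    then obtain k where "w = k *s u" by (auto simp: span_singleton)
    then show False using nab by (simp add: rsc alt)
  qed
  have uw: "u \<notin> span {w}"
  proof
    assume "u \<in> span {w}"
    then obtain k where "u = k *s w" by (auto simp: span_singleton)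
    then show False using nab by (simp add: lsc alt)
  qed
  obtain x0 v0 r where x0: "x0 \<noteq> 0" and v0: "v0 \<notin> span {x0}" and r: "br x0 v0 = v0 + r *s x0"
  proof (cases "b = 0")
    case False
    define x0 where "x0 = inverse b *s u"
    have "x0 \<noteq> 0" using u0 False by (simp add: x0_def)
    moreover have "span {x0} \<subseteq> span {u}"
      by (intro span_minimal) (auto simp: x0_def intro: span_scale span_base)
    then have "w \<notin> span {x0}" using wu by blast
    moreover have "br x0 w = w + a *s x0"
      using False by (simp add: x0_def lsc ab algebra_simps mult.commute)
    ultimately show ?thesis using that by blast
  next
    case True
    then have a0: "a \<noteq> 0" using nab ab by auto
    define x0 where "x0 = (- inverse a) *s w"
    have "x0 \<noteq> 0" using w0 a0 by (simp add: x0_def)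
    moreover have "span {x0} \<subseteq> span {w}"
      by (intro span_minimal) (auto simp: x0_def intro: span_neg span_scale span_base)
    then have "u \<notin> span {x0}" using uw by blast
    moreover have "br x0 u = u + 0 *s x0"
    proof -
      have "br x0 u = (- inverse a) *s br w u" unfolding x0_def by (rule lsc)
      also have "\<dots> = (- inverse a) *s (- (a *s u))" using True anti[of w u] ab by simp
      also have "\<dots> = (inverse a * a) *s u" by (simp only: scale_minus_right scale_minus_left scale_scale minus_minus mult_minus_left)
      finally show ?thesis using a0 by simp
    qed
    ultimately show ?thesis using that by blast
  qed
  define A where "A = {v. br x0 v = v}"
  have sA: "subspace A" unfolding subspace_def A_def by (simp add: radd rsc)
  have dec: "\<exists>c. \<exists>a\<in>A. v = c *s x0 + a" for v
  proof -
    obtain q where q: "br x0 v = v + q *s x0" using key[OF P v0 r] by blast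
    have "v + q *s x0 \<in> A" by (simp add: A_def radd rsc alt q)
    moreover have "v = (- q) *s x0 + (v + q *s x0)" by simp
    ultimately show ?thesis by blast
  qed
  have abel: "\<forall>a\<in>A. \<forall>b\<in>A. br a b = 0"
  proof (intro ballI)
    fix a b assume a: "a \<in> A" and b: "b \<in> A"
    have "span {a, b} \<subseteq> A" using a b sA by (intro span_minimal) auto
    then have "br a b \<in> A" using P by blast
    then have h1: "br x0 (br a b) = br a b" by (simp add: A_def)
    have "br x0 (br a b) + br a (br b x0) + br b (br x0 a) = 0" by (rule jac)
    moreover have "br b x0 = - b"
    proof -
      have "br x0 b = b" using b by (simp add: A_def)
      then show ?thesis using anti[of x0 b] by (metis minus_minus)
    qed
    moreover have "br x0 a = a" using a by (simp add: A_def)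
    ultimately have J: "br x0 (br a b) + br a (br b x0) + br b (br x0 a) = 0"
      and e1: "br b x0 = - b" and e2: "br x0 a = a" by blast+
    have e3: "br a (br b x0) = - br a b" by (simp only: e1 brneg)
    have e4: "br b (br x0 a) = - br a b" by (simp only: e2 anti[of b a])
    have "br a b + - br a b + - br a b = 0" using J by (simp only: h1 e3 e4)
    then show "br a b = 0" by simp
  qed
  have ideal: "lie_ideal scale br A"
    unfolding lie_ideal_def
  proof (intro conjI allI ballI sA)
    fix y a assume a: "a \<in> A"
    obtain c b where b: "b \<in> A" and y: "y = c *s x0 + b" using dec by blast
    have ea: "br x0 a = a" using a by (simp add: A_def)
    have eb: "br b a = 0" using a b abel by blast
    have "br y a = c *s br x0 a + br b a" unfolding y by (simp only: ladd lsc)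
    then have "br y a = c *s a" by (simp only: ea eb add_0_right)
    then show "br y a \<in> A" using sA a by (simp add: subspace_scale)
  qed
  have xA: "x0 \<notin> A" using x0 by (simp add: A_def alt)
  obtain B where B: "B \<subseteq> A" "independent B" "A \<subseteq> span B" "card B = dim A"
    using basis_exists by blast
  have finB: "finite B" using independent_span_bound[OF fin(1) B(2)] fin(2) by auto
  have spBA: "span B \<subseteq> A" using B(1) sA by (rule span_minimal)
  have xB: "x0 \<notin> span B" using spBA xA by blast
  have ind: "independent (insert x0 B)" by (rule independent_insertI[OF xB B(2)])
  have sp: "UNIV \<subseteq> span (insert x0 B)"
  proof
    fix v :: 'v
    obtain c a where a: "a \<in> A" and v: "v = c *s x0 + a" using dec by blast
    have "a \<in> span (insert x0 B)" using a B(3) span_mono[of B "insert x0 B"] by blast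
    moreover have "c *s x0 \<in> span (insert x0 B)" by (intro span_scale span_base) simp
    ultimately show "v \<in> span (insert x0 B)" unfolding v by (rule span_add[rotated])
  qed
  have "card (insert x0 B) = dim (UNIV::'v set)" using basis_card_eq_dim[OF _ sp ind] by simp
  moreover have "x0 \<notin> B" using xB span_base[of x0 B] by blast
  then have "card (insert x0 B) = Suc (card B)" using finB by simp
  ultimately have dimeq: "dim A + 1 = dim (UNIV::'v set)" using B(4) by simp
  have fx: "\<forall>a\<in>A. br x0 a = a" by (simp add: A_def)
  show ?thesis using ideal abel dimeq xA dec fx by blast
qed

end

theorem lemma2p2:
  fixes scale :: "'k::field \<Rightarrow> 'v::ab_group_add \<Rightarrow> 'v"
    and br :: "'v \<Rightarrow> 'v \<Rightarrow> 'v"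
  assumes "lie_algebra scale br"
    and "finite_dim scale"
    and "min_generators scale br = vector_space.dim scale (UNIV :: 'v set)"
  shows "(\<forall>x y. br x y = 0) \<or>
         (\<exists>x A. lie_ideal scale br A \<and>
                (\<forall>a\<in>A. \<forall>b\<in>A. br a b = 0) \<and>
                vector_space.dim scale A + 1 = vector_space.dim scale (UNIV :: 'v set) \<and>
                x \<notin> A \<and>
                (\<forall>v. \<exists>c. \<exists>a\<in>A. v = scale c x + a) \<and>
                (\<forall>a\<in>A. br x a = a))"
proof -
  have "lieA scale br" using assms(1) unfolding lie_algebra_def lieA_def lieA_axioms_def by blast
  then interpret L: lieA scale br .
  obtain S0 where S0: "finite S0" "L.span S0 = UNIV" using assms(2) unfolding finite_dim_def by blast
  show ?thesis
  proof (cases "\<forall>x y. br x y = 0")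
    case True then show ?thesis by blast
  next
    case False
    then obtain u w where "br u w \<noteq> 0" by blast
    from L.main[OF S0 L.step1[OF S0 assms(3)] this] show ?thesis by blast
  qed
qed

end
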